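(* Let $T$ be a tree and $\mathfrak p=(R\overset{d}{\twoheadleftarrow}S\overset{j}{\hookrightarrow}T)\in\mathfrak P_T$. The map $\mathfrak P_R\to\mathfrak P_T(\ge\mathfrak p)$, $\mathfrak q\mapsto\mathfrak q\circ\mathfrak p$, is an isomorphism of posets, where $\mathfrak P_T(\ge\mathfrak p)=\{\mathfrak q\in\mathfrak P_T:\mathfrak q\ge\mathfrak p\}$ with the induced order.
   Context: A tree is a nonempty finite connected acyclic graph with vertex set $V(T)$ and edge set $E(T)$. Subgraphs are full (vertex-induced); a subtree is a subgraph which is a tree. A quotient tree $S\twoheadrightarrow R$ is a tree $R$ with a surjection $V(S)\to V(R)$ whose fibers are vertex sets of subtrees, vertices of $R$ adjacent iff an edge of $S$ joins their fibers. Poset $\mathfrak P_T$: elements are correspondences $(R\overset{q}{\twoheadleftarrow}S\overset{i}{\hookrightarrow}T)$ with $i$ inclusion of a subtree and $q$ a quotient of trees (equivalently, a subtree $S$ of $T$ with a partition of $S$ into subtrees, the fibers of $q$; correspondences differing by an isomorphism of the quotient tree compatible with the maps are identified). Composition: for $\mathfrak q=(P\twoheadleftarrow Q\hookrightarrow R)$ and $\mathfrak p=(R\twoheadleftarrow S\hookrightarrow T)$, $\mathfrak q\circ\mathfrak p=(P\twoheadleftarrow Q\times_RS\hookrightarrow T)$ where $Q\times_RS$ is the subtree of $S$ on the vertices mapping into $Q$, included into $T$ via $S$ and mapped onto $P$ via $Q$. Order: $\mathfrak p\ge\mathfrak p'$ iff $\mathfrak p=\mathfrak q\circ\mathfrak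 p'$ for some such correspondence $\mathfrak q$. *)

theory Defs
  imports Main
begin

type_synonym 'a graph = "'a set \<times> 'a set set"

definition is_graph :: "'a graph \<Rightarrow> bool" where
  "is_graph G \<longleftrightarrow> finite (fst G) \<and>
     (\<forall>e\<in>snd G. \<exists>u v. e = {u, v} \<and> u \<noteq> v \<and> u \<in> fst G \<and> v \<in> fst G)"

definition adj :: "'a graph \<Rightarrow> 'a \<Rightarrow> 'a \<Rightarrow> bool" where
  "adj G u v \<longleftrightarrow> u \<noteq> v \<and> {u, v} \<in> snd G"

definition graph_connected :: "'a graph \<Rightarrow> bool" where
  "graph_connected G \<longleftrightarrow>
     (\<forall>u\<in>fst G. \<forall>v\<in>fst G. (u, v) \<in> {(x, y). adj G x y}\<^sup>*)"

definition is_cycle :: "'a graph \<Rightarrow> 'a list \<Rightarrow> bool" where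
  "is_cycle G xs \<longleftrightarrow> length xs \<ge> 3 \<and> distinct xs \<and>
     (\<forall>i < length xs. adj G (xs ! i) (xs ! ((i + 1) mod length xs)))"

definition graph_acyclic :: "'a graph \<Rightarrow> bool" where
  "graph_acyclic G \<longleftrightarrow> \<not> (\<exists>xs. is_cycle G xs)"

definition is_tree :: "'a graph \<Rightarrow> bool" where
  "is_tree G \<longleftrightarrow> is_graph G \<and> fst G \<noteq> {} \<and> graph_connected G \<and> graph_acyclic G"

definition induced :: "'a graph \<Rightarrow> 'a set \<Rightarrow> 'a graph" where
  "induced G W = (W, {e \<in> snd G. e \<subseteq> W})"

definition subtree_set :: "'a graph \<Rightarrow> 'a set \<Rightarrow> bool" where
  "subtree_set G W \<longleftrightarrow> W \<subseteq> fst G \<and> is_tree (induced G W)"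

definition quotient_graph :: "'a graph \<Rightarrow> 'a set set \<Rightarrow> 'a set graph" where
  "quotient_graph G P = (P, {{B, C} | B C. B \<in> P \<and> C \<in> P \<and> B \<noteq> C \<and>
       (\<exists>u\<in>B. \<exists>v\<in>C. {u, v} \<in> snd G)})"

text \<open>An element of P_T: correspondence R <<- S -> T, encoded by the set of fibers of
  the quotient map S ->> R (a partition of the subtree S = \<Union>P into subtrees),
  the quotient tree R being determined up to isomorphism by the fibers.\<close>
definition is_corr :: "'a graph \<Rightarrow> 'a set set \<Rightarrow> bool" where
  "is_corr G P \<longleftrightarrow>
     subtree_set G (\<Union>P) \<and>
     (\<forall>B\<in>P. subtree_set G B) \<and>
     (\<forall>B\<in>P. \<forall>C\<in>P. B \<noteq> C \<longrightarrow> B \<inter> C = {}) \<and>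
     is_tree (quotient_graph G P)"

definition PP :: "'a graph \<Rightarrow> 'a set set set" where
  "PP G = {P. is_corr G P}"

text \<open>Composition q \<circ> p, for q in P_R with R = quotient_graph T p: the fiber of
  Q \<times>_R S over a vertex of P (a set B' of blocks of p) is \<Union>B'.\<close>
definition comp_corr :: "'a set set set \<Rightarrow> 'a set set \<Rightarrow> 'a set set" where
  "comp_corr Q P = (\<lambda>B'. \<Union>B') ` Q"

definition corr_ge :: "'a graph \<Rightarrow> 'a set set \<Rightarrow> 'a set set \<Rightarrow> bool" where
  "corr_ge G p p' \<longleftrightarrow> (\<exists>q \<in> PP (quotient_graph G p'). p = comp_corr q p')"

end

theory Submission
  imports Defs
begin



definition gmap :: "('a \<Rightarrow> 'b) \<Rightarrow> 'a graph \<Rightarrow> 'b graph" where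
  "gmap f G = (f ` fst G, (image f) ` snd G)"

lemma edge_sub: "is_graph G \<Longrightarrow> e \<in> snd G \<Longrightarrow> e \<subseteq> fst G"
  unfolding is_graph_def by fastforce

lemma adj_in: "is_graph G \<Longrightarrow> adj G x y \<Longrightarrow> x \<in> fst G \<and> y \<in> fst G"
  unfolding adj_def using edge_sub by fastforce

lemma is_graph_gmap: "is_graph G \<Longrightarrow> inj_on f (fst G) \<Longrightarrow> is_graph (gmap f G)"
proof -
  assume g: "is_graph G" and i: "inj_on f (fst G)"
  have "\<exists>u v. e' = {u, v} \<and> u \<noteq> v \<and> u \<in> f ` fst G \<and> v \<in> f ` fst G" if "e' \<in> image f ` snd G" for e'
  proof -
    from that obtain e where e: "e \<in> snd G" "e' = f ` e" by blast
    from g e(1) obtain u v where uv: "e = {u,v}" "u \<noteq> v" "u \<in> fst G" "v \<in> fst G" unfolding is_graph_def by blast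
    have "f u \<noteq> f v" using uv i by (meson inj_onD)
    then show ?thesis using e uv by auto
  qed
  then show ?thesis using g unfolding is_graph_def gmap_def by auto
qed

lemma adj_gmap: "is_graph G \<Longrightarrow> inj_on f (fst G) \<Longrightarrow> adj G x y \<Longrightarrow> adj (gmap f G) (f x) (f y)"
proof -
  assume g: "is_graph G" and i: "inj_on f (fst G)" and a: "adj G x y"
  from adj_in[OF g a] have "x \<in> fst G" "y \<in> fst G" by auto
  with a i show ?thesis unfolding adj_def gmap_def
    by (auto dest: inj_onD intro!: image_eqI[where x="{x,y}"])
qed

lemma adj_gmap_rev:
  assumes g: "is_graph G" and i: "inj_on f (fst G)" and a: "adj (gmap f G) a b"
  shows "\<exists>x y. a = f x \<and> b = f y \<and> adj G x y"
proof -
  from a obtain e where e: "e \<in> snd G" "{a,b} = f ` e" "a \<noteq> b"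
    unfolding adj_def gmap_def by auto
  from g e(1) obtain u v where uv: "e = {u,v}" "u \<noteq> v" unfolding is_graph_def by blast
  from e uv have "(a = f u \<and> b = f v) \<or> (a = f v \<and> b = f u)" by (auto simp: doubleton_eq_iff)
  moreover have "adj G u v" "adj G v u" using e uv unfolding adj_def by (auto simp: insert_commute)
  ultimately show ?thesis by blast
qed

lemma tree_gmap:
  assumes t: "is_tree G" and i: "inj_on f (fst G)"
  shows "is_tree (gmap f G)"
proof -
  have g: "is_graph G" using t unfolding is_tree_def by auto
  have c: "graph_connected (gmap f G)"
    unfolding graph_connected_def
  proof (intro ballI)
    fix a b assume "a \<in> fst (gmap f G)" "b \<in> fst (gmap f G)"
    then obtain x y where xy: "x \<in> fst G" "y \<in> fst G" "a = f x" "b = f y" unfolding gmap_def by auto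
    have "(x, y) \<in> {(x, y). adj G x y}\<^sup>*" using t xy unfolding is_tree_def graph_connected_def by auto
    then have "(f x, f y) \<in> {(x, y). adj (gmap f G) x y}\<^sup>*"
    proof (induction rule: rtrancl_induct)
      case base then show ?case by simp
    next
      case (step y z)
      have "adj (gmap f G) (f y) (f z)" using adj_gmap[OF g i] step(2) by simp
      then show ?case using step(3) by (simp add: rtrancl.rtrancl_into_rtrancl)
    qed
    then show "(a, b) \<in> {(x, y). adj (gmap f G) x y}\<^sup>*" using xy by simp
  qed
  have ac: "graph_acyclic (gmap f G)"
    unfolding graph_acyclic_def
  proof
    assume "\<exists>xs. is_cycle (gmap f G) xs"
    then obtain xs where cy: "is_cycle (gmap f G) xs" by blast
    define h where "h = inv_into (fst G) f"
    define ys where "ys = map h xs"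
    have gg: "is_graph (gmap f G)" using is_graph_gmap[OF g i] .
    have ai: "\<And>a b. adj (gmap f G) a b \<Longrightarrow> adj G (h a) (h b)"
    proof -
      fix a b assume "adj (gmap f G) a b"
      from adj_gmap_rev[OF g i this] obtain x y where "a = f x" "b = f y" "adj G x y" by blast
      moreover have "x \<in> fst G" "y \<in> fst G" using adj_in[OF g \<open>adj G x y\<close>] by auto
      ultimately show "adj G (h a) (h b)" unfolding h_def using i by simp
    qed
    have sub: "set xs \<subseteq> fst (gmap f G)"
    proof
      fix a assume "a \<in> set xs"
      then obtain k where k: "k < length xs" "xs ! k = a" by (auto simp: in_set_conv_nth)
      with cy have "adj (gmap f G) a (xs ! ((k+1) mod length xs))" unfolding is_cycle_def by auto
      then show "a \<in> fst (gmap f G)" using adj_in[OF gg] by blast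
    qed
    have "inj_on h (fst (gmap f G))" unfolding h_def gmap_def by (simp add: inj_on_inv_into)
    then have "distinct ys" using cy sub unfolding ys_def is_cycle_def
      by (simp add: distinct_map inj_on_subset)
    moreover have "\<forall>k < length ys. adj G (ys ! k) (ys ! ((k + 1) mod length ys))"
    proof (intro allI impI)
      fix k assume "k < length ys"
      then have k: "k < length xs" unfolding ys_def by simp
      have "0 < length xs" using k by linarith
      then have "Suc k mod length xs < length xs" by (rule mod_less_divisor)
      then show "adj G (ys ! k) (ys ! ((k + 1) mod length ys))"
        using cy ai k unfolding ys_def is_cycle_def by auto
    qed
    ultimately have "is_cycle G ys" using cy unfolding is_cycle_def ys_def by auto
    then show False using t unfolding is_tree_def graph_acyclic_def by blast
  qed
  show ?thesis using t is_graph_gmap[OF g i] c ac unfolding is_tree_def gmap_def by auto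
qed




lemma induced_gmap:
  assumes g: "is_graph G" and i: "inj_on f (fst G)" and W: "W \<subseteq> fst G"
  shows "induced (gmap f G) (f ` W) = gmap f (induced G W)"
proof -
  have "{e' \<in> image f ` snd G. e' \<subseteq> f ` W} = image f ` {e \<in> snd G. e \<subseteq> W}"
  proof (intro equalityI subsetI)
    fix e' assume "e' \<in> {e' \<in> image f ` snd G. e' \<subseteq> f ` W}"
    then obtain e where e: "e \<in> snd G" "e' = f ` e" "f ` e \<subseteq> f ` W" by blast
    have "e \<subseteq> fst G" using edge_sub[OF g e(1)] .
    then have "e \<subseteq> W"
    proof (intro subsetI)
      fix x assume "e \<subseteq> fst G" "x \<in> e"
      then have "f x \<in> f ` W" "x \<in> fst G" using e(3) by auto
      then show "x \<in> W" using inj_on_image_mem_iff[OF i _ W] by blast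
    qed
    then show "e' \<in> image f ` {e \<in> snd G. e \<subseteq> W}" using e by blast
  next
    fix e' assume "e' \<in> image f ` {e \<in> snd G. e \<subseteq> W}"
    then show "e' \<in> {e' \<in> image f ` snd G. e' \<subseteq> f ` W}" by blast
  qed
  then show ?thesis unfolding induced_def gmap_def by simp
qed

lemma is_graph_induced:
  assumes g: "is_graph G" and W: "W \<subseteq> fst G" shows "is_graph (induced G W)"
proof -
  have "finite W" using g W unfolding is_graph_def by (meson finite_subset)
  moreover have "\<exists>u v. e = {u, v} \<and> u \<noteq> v \<and> u \<in> W \<and> v \<in> W" if "e \<in> snd G" "e \<subseteq> W" for e
  proof -
    from g that(1) obtain u v where "e = {u,v}" "u \<noteq> v" unfolding is_graph_def by blast
    then show ?thesis using that(2) by blast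
  qed
  ultimately show ?thesis unfolding is_graph_def induced_def by simp
qed

lemma subtree_gmap:
  assumes g: "is_graph G" and i: "inj_on f (fst G)" and s: "subtree_set G W"
  shows "subtree_set (gmap f G) (f ` W)"
proof -
  have W: "W \<subseteq> fst G" using s unfolding subtree_set_def by auto
  have "is_tree (gmap f (induced G W))"
    using tree_gmap[of "induced G W" f] s W i unfolding subtree_set_def
    by (simp add: induced_def inj_on_subset)
  then show ?thesis using induced_gmap[OF g i W] W unfolding subtree_set_def gmap_def by auto
qed

lemma quot_gmap:
  assumes g: "is_graph G" and i: "inj_on f (fst G)" and P: "\<forall>B\<in>P. B \<subseteq> fst G"
  shows "quotient_graph (gmap f G) (image f ` P) = gmap (image f) (quotient_graph G P)"
proof -
  have ip: "inj_on (image f) P" using inj_on_image_Pow[OF i] P by (meson PowI inj_on_subset subsetI)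
  have key: "(\<exists>u\<in>f ` B. \<exists>v\<in>f ` C. {u, v} \<in> image f ` snd G) \<longleftrightarrow> (\<exists>u\<in>B. \<exists>v\<in>C. {u, v} \<in> snd G)"
    if "B \<in> P" "C \<in> P" for B C
  proof
    assume "\<exists>u\<in>f ` B. \<exists>v\<in>f ` C. {u, v} \<in> image f ` snd G"
    then obtain x y e where xy: "x \<in> B" "y \<in> C" "e \<in> snd G" "{f x, f y} = f ` e" by blast
    have xyG: "x \<in> fst G" "y \<in> fst G" using xy that P by auto
    have eG: "e \<subseteq> fst G" using edge_sub[OF g xy(3)] .
    have "f ` {x,y} = f ` e" using xy by simp
    moreover have "{x,y} \<subseteq> fst G" using xyG by simp
    ultimately have "{x,y} = e" using inj_on_image_eq_iff[OF i _ eG] by blast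
    then show "\<exists>u\<in>B. \<exists>v\<in>C. {u, v} \<in> snd G" using xy by blast
  next
    assume "\<exists>u\<in>B. \<exists>v\<in>C. {u, v} \<in> snd G"
    then obtain x y where "x \<in> B" "y \<in> C" "{x,y} \<in> snd G" by blast
    then show "\<exists>u\<in>f ` B. \<exists>v\<in>f ` C. {u, v} \<in> image f ` snd G"
      by (intro bexI[of _ "f x"] bexI[of _ "f y"] image_eqI[of _ _ "{x,y}"]) auto
  qed
  have "{{B', C'} |B' C'. B' \<in> image f ` P \<and> C' \<in> image f ` P \<and> B' \<noteq> C' \<and>
         (\<exists>u\<in>B'. \<exists>v\<in>C'. {u, v} \<in> image f ` snd G)}
      = image (image f) ` {{B, C} |B C. B \<in> P \<and> C \<in> P \<and> B \<noteq> C \<and>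
         (\<exists>u\<in>B. \<exists>v\<in>C. {u, v} \<in> snd G)}"
  proof (intro equalityI subsetI)
    fix e assume "e \<in> {{B', C'} |B' C'. B' \<in> image f ` P \<and> C' \<in> image f ` P \<and> B' \<noteq> C' \<and>
         (\<exists>u\<in>B'. \<exists>v\<in>C'. {u, v} \<in> image f ` snd G)}"
    then obtain B C where BC: "B \<in> P" "C \<in> P" "e = {f ` B, f ` C}" "f ` B \<noteq> f ` C"
       "\<exists>u\<in>f ` B. \<exists>v\<in>f ` C. {u, v} \<in> image f ` snd G" by blast
    have nb: "B \<noteq> C" using BC(4) by auto
    have ex: "\<exists>u\<in>B. \<exists>v\<in>C. {u, v} \<in> snd G" using key[OF BC(1,2)] BC(5) by blast
    have mem: "{B,C} \<in> {{B, C} |B C. B \<in> P \<and> C \<in> P \<and> B \<noteq> C \<and>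
         (\<exists>u\<in>B. \<exists>v\<in>C. {u, v} \<in> snd G)}" using BC(1,2) nb ex by blast
    have eq: "e = image f ` {B,C}" using BC(3) by simp
    show "e \<in> image (image f) ` {{B, C} |B C. B \<in> P \<and> C \<in> P \<and> B \<noteq> C \<and>
         (\<exists>u\<in>B. \<exists>v\<in>C. {u, v} \<in> snd G)}"
      by (rule image_eqI[where f="image (image f)", OF eq mem])
  next
    fix e assume "e \<in> image (image f) ` {{B, C} |B C. B \<in> P \<and> C \<in> P \<and> B \<noteq> C \<and>
         (\<exists>u\<in>B. \<exists>v\<in>C. {u, v} \<in> snd G)}"
    then obtain B C where BC: "B \<in> P" "C \<in> P" "e = {f ` B, f ` C}" "B \<noteq> C"
       "\<exists>u\<in>B. \<exists>v\<in>C. {u, v} \<in> snd G" by blast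
    have "f ` B \<noteq> f ` C" using ip BC(1,2,4) by (meson inj_onD)
    moreover have "\<exists>u\<in>f ` B. \<exists>v\<in>f ` C. {u, v} \<in> image f ` snd G"
      using key[OF BC(1,2)] BC(5) by blast
    ultimately show "e \<in> {{B', C'} |B' C'. B' \<in> image f ` P \<and> C' \<in> image f ` P \<and> B' \<noteq> C' \<and>
         (\<exists>u\<in>B'. \<exists>v\<in>C'. {u, v} \<in> image f ` snd G)}" using BC(1,2,3) by blast
  qed
  then show ?thesis unfolding quotient_graph_def gmap_def by simp
qed

lemma PP_gmap:
  assumes g: "is_graph G" and i: "inj_on f (fst G)" and P: "P \<in> PP G"
  shows "image f ` P \<in> PP (gmap f G)"
proof -
  have c: "is_corr G P" using P unfolding PP_def by simp
  have PG: "\<forall>B\<in>P. B \<subseteq> fst G" using c unfolding is_corr_def subtree_set_def by blast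
  have ip: "inj_on (image f) P" using inj_on_image_Pow[OF i] PG by (meson PowI inj_on_subset subsetI)
  have "subtree_set (gmap f G) (\<Union> (image f ` P))"
    using subtree_gmap[OF g i, of "\<Union>P"] c unfolding is_corr_def by (simp add: image_Union)
  moreover have "\<forall>B\<in>image f ` P. subtree_set (gmap f G) B"
    using subtree_gmap[OF g i] c unfolding is_corr_def by blast
  moreover have "\<forall>B\<in>image f ` P. \<forall>C\<in>image f ` P. B \<noteq> C \<longrightarrow> B \<inter> C = {}"
  proof (intro ballI impI)
    fix B' C' assume "B' \<in> image f ` P" "C' \<in> image f ` P" "B' \<noteq> C'"
    then obtain B C where "B \<in> P" "C \<in> P" "B' = f ` B" "C' = f ` C" "B \<noteq> C" by blast
    then show "B' \<inter> C' = {}" using c PG inj_on_image_Int[OF i] unfolding is_corr_def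
      by (metis image_empty)
  qed
  moreover have "is_tree (quotient_graph (gmap f G) (image f ` P))"
    using quot_gmap[OF g i PG] tree_gmap[of "quotient_graph G P" "image f"] c ip
    unfolding is_corr_def by (simp add: quotient_graph_def)
  ultimately show ?thesis unfolding PP_def is_corr_def by simp
qed




lemma corr_facts:
  assumes "p \<in> PP T"
  shows "subtree_set T (\<Union>p)" "\<And>B. B \<in> p \<Longrightarrow> subtree_set T B"
    "\<And>B C. B \<in> p \<Longrightarrow> C \<in> p \<Longrightarrow> B \<noteq> C \<Longrightarrow> B \<inter> C = {}"
    "is_tree (quotient_graph T p)"
  using assms unfolding PP_def is_corr_def by auto

lemma subtree_ne: "subtree_set G B \<Longrightarrow> B \<noteq> {}"
  unfolding subtree_set_def is_tree_def induced_def by simp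

lemma inj_Union_Pow:
  assumes ne: "\<And>B. B \<in> p \<Longrightarrow> B \<noteq> {}"
    and dj: "\<And>B C. B \<in> p \<Longrightarrow> C \<in> p \<Longrightarrow> B \<noteq> C \<Longrightarrow> B \<inter> C = {}"
  shows "inj_on Union (Pow p)"
proof -
  have *: "X \<subseteq> Y" if h: "X \<subseteq> p" "Y \<subseteq> p" "\<Union>X = \<Union>Y" for X Y
  proof
    fix B assume B: "B \<in> X"
    then obtain x where "x \<in> B" using ne h(1) B by blast
    then have "x \<in> \<Union>Y" using B h(3) by blast
    then obtain C where "C \<in> Y" "x \<in> C" by blast
    then have "B = C" using dj[of B C] B h \<open>x \<in> B\<close> by blast
    then show "B \<in> Y" using \<open>C \<in> Y\<close> by simp
  qed
  show ?thesis unfolding inj_on_def using * by (metis PowD subset_antisym)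
qed

lemma quot_edge:
  assumes "{C, D} \<in> snd (quotient_graph T p)"
  shows "\<exists>u\<in>C. \<exists>v\<in>D. {u, v} \<in> snd T"
proof -
  from assms obtain B0 C0 where b: "{C,D} = {B0,C0}" "\<exists>u\<in>B0. \<exists>v\<in>C0. {u, v} \<in> snd T"
    unfolding quotient_graph_def by auto
  then show ?thesis
  proof (cases "C = B0 \<and> D = C0")
    case True then show ?thesis using b by blast
  next
    case False
    then have "C = C0" "D = B0" using b(1) by (auto simp: doubleton_eq_iff)
    then show ?thesis using b(2) by (metis insert_commute)
  qed
qed

lemma subtree_lift:
  assumes t: "is_tree T" and p: "p \<in> PP T" and W: "W \<subseteq> p"
    and s: "subtree_set (quotient_graph T p) W"
  shows "subtree_set T (\<Union>W)"
proof -
  let ?R = "quotient_graph T p"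
  have g: "is_graph T" using t unfolding is_tree_def by simp
  have Up: "\<Union>p \<subseteq> fst T" using corr_facts(1)[OF p] unfolding subtree_set_def by simp
  have UW: "\<Union>W \<subseteq> fst T" using W Up by blast
  have Wne: "W \<noteq> {}" using subtree_ne[OF s] .
  have bne: "\<And>B. B \<in> p \<Longrightarrow> B \<noteq> {}" using corr_facts(2)[OF p] subtree_ne by blast
  have ig: "is_graph (induced T (\<Union>W))" using is_graph_induced[OF g UW] .
  have ne: "\<Union>W \<noteq> {}" using Wne W bne by blast
  have ac: "graph_acyclic (induced T (\<Union>W))"
  proof -
    have "is_cycle T xs" if "is_cycle (induced T (\<Union>W)) xs" for xs
      using that unfolding is_cycle_def adj_def induced_def by auto
    then show ?thesis using t unfolding is_tree_def graph_acyclic_def by blast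
  qed
  let ?A = "{(x, y). adj (induced T (\<Union>W)) x y}"
  have c1: "(x, y) \<in> ?A\<^sup>*" if "B \<in> W" "x \<in> B" "y \<in> B" for B x y
  proof -
    have "B \<in> p" using that W by blast
    then have "(x, y) \<in> {(x, y). adj (induced T B) x y}\<^sup>*"
      using corr_facts(2)[OF p] that unfolding subtree_set_def is_tree_def graph_connected_def
      by (auto simp: induced_def)
    moreover have "{(x, y). adj (induced T B) x y} \<subseteq> ?A"
      using that(1) unfolding adj_def induced_def by auto
    ultimately show ?thesis using rtrancl_mono by blast
  qed
  have c2: "\<forall>x\<in>B. \<forall>y\<in>C. (x, y) \<in> ?A\<^sup>*"
    if "(B, C) \<in> {(x, y). adj (induced ?R W) x y}\<^sup>*" "B \<in> W" for B C
    using that(1)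
  proof (induction rule: rtrancl_induct)
    case base
    then show ?case using c1 that(2) by blast
  next
    case (step C D)
    have a: "adj (induced ?R W) C D" using step(2) by simp
    then have CD: "C \<noteq> D" "{C, D} \<in> snd ?R" "C \<in> W" "D \<in> W"
      unfolding adj_def induced_def by auto
    obtain u v where uv: "u \<in> C" "v \<in> D" "{u, v} \<in> snd T" using quot_edge[OF CD(2)] by blast
    have "u \<noteq> v" using corr_facts(3)[OF p, of C D] CD W uv by blast
    then have auv: "(u, v) \<in> ?A" using uv CD unfolding adj_def induced_def by auto
    show ?case
    proof (intro ballI)
      fix x y assume "x \<in> B" "y \<in> D"
      have "(x, u) \<in> ?A\<^sup>*" using step(3) \<open>x \<in> B\<close> uv(1) by blast
      moreover have "(v, y) \<in> ?A\<^sup>*" using c1[OF CD(4) uv(2) \<open>y \<in> D\<close>] .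
      ultimately show "(x, y) \<in> ?A\<^sup>*" using auv
        by (meson rtrancl.rtrancl_into_rtrancl rtrancl_trans)
    qed
  qed
  have con: "graph_connected (induced T (\<Union>W))"
    unfolding graph_connected_def
  proof (intro ballI)
    fix x y assume "x \<in> fst (induced T (\<Union>W))" "y \<in> fst (induced T (\<Union>W))"
    then obtain B C where "B \<in> W" "C \<in> W" "x \<in> B" "y \<in> C" unfolding induced_def by auto
    moreover have "(B, C) \<in> {(x, y). adj (induced ?R W) x y}\<^sup>*"
      using s \<open>B \<in> W\<close> \<open>C \<in> W\<close> unfolding subtree_set_def is_tree_def graph_connected_def
      by (auto simp: induced_def)
    ultimately show "(x, y) \<in> ?A\<^sup>*" using c2 by blast
  qed
  show ?thesis unfolding subtree_set_def is_tree_def using UW ig ne ac con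
    by (simp add: induced_def)
qed




lemma corr_sub: "q \<in> PP G \<Longrightarrow> X \<in> q \<Longrightarrow> X \<subseteq> fst G"
  unfolding PP_def is_corr_def subtree_set_def by auto

lemma quot_comp:
  assumes t: "is_tree T" and p: "p \<in> PP T" and q: "q \<in> PP (quotient_graph T p)"
  shows "quotient_graph T (Union ` q) = gmap Union (quotient_graph (quotient_graph T p) q)"
proof -
  let ?R = "quotient_graph T p"
  have qs: "\<And>X. X \<in> q \<Longrightarrow> X \<subseteq> p" using corr_sub[OF q] by (simp add: quotient_graph_def)
  have bne: "\<And>B. B \<in> p \<Longrightarrow> B \<noteq> {}" using corr_facts(2)[OF p] subtree_ne by blast
  have iU: "inj_on Union (Pow p)" using inj_Union_Pow[OF bne corr_facts(3)[OF p]] by blast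
  have iq: "inj_on Union q" using iU qs by (meson PowI inj_on_subset subsetI)
  have key: "(\<exists>u\<in>\<Union>X. \<exists>v\<in>\<Union>Y. {u, v} \<in> snd T) \<longleftrightarrow> (\<exists>b\<in>X. \<exists>c\<in>Y. {b, c} \<in> snd ?R)"
    if XY: "X \<in> q" "Y \<in> q" "X \<noteq> Y" for X Y
  proof
    assume "\<exists>u\<in>\<Union>X. \<exists>v\<in>\<Union>Y. {u, v} \<in> snd T"
    then obtain u v b c where uv: "b \<in> X" "c \<in> Y" "u \<in> b" "v \<in> c" "{u,v} \<in> snd T" by blast
    have "X \<inter> Y = {}" using corr_facts(3)[OF q] XY by blast
    then have "b \<noteq> c" using uv by blast
    moreover have "b \<in> p" "c \<in> p" using qs XY uv by auto
    ultimately have "{b,c} \<in> snd ?R" using uv unfolding quotient_graph_def by auto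
    then show "\<exists>b\<in>X. \<exists>c\<in>Y. {b, c} \<in> snd ?R" using uv by blast
  next
    assume "\<exists>b\<in>X. \<exists>c\<in>Y. {b, c} \<in> snd ?R"
    then obtain b c where "b \<in> X" "c \<in> Y" "{b,c} \<in> snd ?R" by blast
    then show "\<exists>u\<in>\<Union>X. \<exists>v\<in>\<Union>Y. {u, v} \<in> snd T" using quot_edge by blast
  qed
  have "{{B', C'} |B' C'. B' \<in> Union ` q \<and> C' \<in> Union ` q \<and> B' \<noteq> C' \<and>
         (\<exists>u\<in>B'. \<exists>v\<in>C'. {u, v} \<in> snd T)}
      = image Union ` {{X, Y} |X Y. X \<in> q \<and> Y \<in> q \<and> X \<noteq> Y \<and>
         (\<exists>b\<in>X. \<exists>c\<in>Y. {b, c} \<in> snd ?R)}"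
  proof (intro equalityI subsetI)
    fix e assume "e \<in> {{B', C'} |B' C'. B' \<in> Union ` q \<and> C' \<in> Union ` q \<and> B' \<noteq> C' \<and>
         (\<exists>u\<in>B'. \<exists>v\<in>C'. {u, v} \<in> snd T)}"
    then obtain X Y where BC: "X \<in> q" "Y \<in> q" "e = {\<Union>X, \<Union>Y}" "\<Union>X \<noteq> \<Union>Y"
       "\<exists>u\<in>\<Union>X. \<exists>v\<in>\<Union>Y. {u, v} \<in> snd T" by blast
    have nb: "X \<noteq> Y" using BC(4) by auto
    have ex: "\<exists>b\<in>X. \<exists>c\<in>Y. {b, c} \<in> snd ?R" using key[OF BC(1,2) nb] BC(5) by blast
    have mem: "{X,Y} \<in> {{X, Y} |X Y. X \<in> q \<and> Y \<in> q \<and> X \<noteq> Y \<and>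
         (\<exists>b\<in>X. \<exists>c\<in>Y. {b, c} \<in> snd ?R)}" using BC(1,2) nb ex by blast
    have eq: "e = image Union {X,Y}" using BC(3) by simp
    show "e \<in> image Union ` {{X, Y} |X Y. X \<in> q \<and> Y \<in> q \<and> X \<noteq> Y \<and>
         (\<exists>b\<in>X. \<exists>c\<in>Y. {b, c} \<in> snd ?R)}"
      by (rule image_eqI[where f="image Union", OF eq mem])
  next
    fix e assume "e \<in> image Union ` {{X, Y} |X Y. X \<in> q \<and> Y \<in> q \<and> X \<noteq> Y \<and>
         (\<exists>b\<in>X. \<exists>c\<in>Y. {b, c} \<in> snd ?R)}"
    then obtain X Y where BC: "X \<in> q" "Y \<in> q" "e = {\<Union>X, \<Union>Y}" "X \<noteq> Y"
       "\<exists>b\<in>X. \<exists>c\<in>Y. {b, c} \<in> snd ?R" by blast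
    have "\<Union>X \<noteq> \<Union>Y" using iq BC(1,2,4) by (meson inj_onD)
    moreover have "\<exists>u\<in>\<Union>X. \<exists>v\<in>\<Union>Y. {u, v} \<in> snd T"
      using key[OF BC(1,2,4)] BC(5) by blast
    ultimately show "e \<in> {{B', C'} |B' C'. B' \<in> Union ` q \<and> C' \<in> Union ` q \<and> B' \<noteq> C' \<and>
         (\<exists>u\<in>B'. \<exists>v\<in>C'. {u, v} \<in> snd T)}" using BC(1,2,3) by blast
  qed
  then show ?thesis unfolding quotient_graph_def[of T "Union ` q"] gmap_def
    by (simp add: quotient_graph_def[of ?R q])
qed

lemma comp_PP:
  assumes t: "is_tree T" and p: "p \<in> PP T" and q: "q \<in> PP (quotient_graph T p)"
  shows "comp_corr q p \<in> PP T"
proof -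
  let ?R = "quotient_graph T p"
  have qs: "\<And>X. X \<in> q \<Longrightarrow> X \<subseteq> p" using corr_sub[OF q] by (simp add: quotient_graph_def)
  have bne: "\<And>B. B \<in> p \<Longrightarrow> B \<noteq> {}" using corr_facts(2)[OF p] subtree_ne by blast
  have iU: "inj_on Union (Pow p)" using inj_Union_Pow[OF bne corr_facts(3)[OF p]] by blast
  have iq: "inj_on Union q" using iU qs by (meson PowI inj_on_subset subsetI)
  have a1: "subtree_set T (\<Union>(Union ` q))"
  proof -
    have "\<Union>(Union ` q) = \<Union>(\<Union>q)" by blast
    moreover have "\<Union>q \<subseteq> p" using qs by blast
    ultimately show ?thesis using subtree_lift[OF t p _ corr_facts(1)[OF q]] by simp
  qed
  have a2: "\<forall>B\<in>Union ` q. subtree_set T B"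
    using subtree_lift[OF t p qs corr_facts(2)[OF q]] by blast
  have a3: "\<forall>B\<in>Union ` q. \<forall>C\<in>Union ` q. B \<noteq> C \<longrightarrow> B \<inter> C = {}"
  proof (intro ballI impI)
    fix B C assume "B \<in> Union ` q" "C \<in> Union ` q" "B \<noteq> C"
    then obtain X Y where XY: "X \<in> q" "Y \<in> q" "B = \<Union>X" "C = \<Union>Y" "X \<noteq> Y" by blast
    have XYd: "X \<inter> Y = {}" using corr_facts(3)[OF q] XY by blast
    show "B \<inter> C = {}"
    proof (rule ccontr)
      assume "B \<inter> C \<noteq> {}"
      then obtain x b c where "x \<in> b" "x \<in> c" "b \<in> X" "c \<in> Y" using XY by blast
      moreover have "b \<noteq> c" using XYd calculation by blast
      moreover have "b \<in> p" "c \<in> p" using qs XY calculation by auto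
      ultimately show False using corr_facts(3)[OF p, of b c] by blast
    qed
  qed
  have a4: "is_tree (quotient_graph T (Union ` q))"
    using quot_comp[OF t p q] tree_gmap[OF corr_facts(4)[OF q]] iq
    by (simp add: quotient_graph_def)
  show ?thesis unfolding comp_corr_def PP_def is_corr_def using a1 a2 a3 a4 by simp
qed




lemma gmap_inv:
  assumes g: "is_graph G" and i: "inj_on f (fst G)"
  shows "gmap (inv_into (fst G) f) (gmap f G) = G"
proof -
  let ?h = "inv_into (fst G) f"
  have v: "?h ` f ` fst G = fst G" using i by (simp add: inv_into_image_cancel)
  have "image ?h ` image f ` snd G = snd G"
  proof -
    have "image ?h (image f e) = e" if "e \<in> snd G" for e
      using edge_sub[OF g that] i by (simp add: inv_into_image_cancel)
    then show ?thesis by (simp add: image_image)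
  qed
  then show ?thesis unfolding gmap_def using v by (simp add: prod_eq_iff)
qed

theorem lemma2p22:
  fixes T :: "'a graph" and p :: "'a set set"
  assumes "is_tree T" and "p \<in> PP T"
  shows "bij_betw (\<lambda>q. comp_corr q p) (PP (quotient_graph T p))
           {q \<in> PP T. corr_ge T q p}
       \<and> (\<forall>q1 \<in> PP (quotient_graph T p). \<forall>q2 \<in> PP (quotient_graph T p).
            corr_ge (quotient_graph T p) q1 q2 \<longleftrightarrow>
            corr_ge T (comp_corr q1 p) (comp_corr q2 p))"
proof -
  note t = assms(1) and p = assms(2)
  let ?R = "quotient_graph T p"
  have bne: "\<And>B. B \<in> p \<Longrightarrow> B \<noteq> {}" using corr_facts(2)[OF p] subtree_ne by blast
  have iU: "inj_on Union (Pow p)" using inj_Union_Pow[OF bne corr_facts(3)[OF p]] by blast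
  have fR: "fst ?R = p" by (simp add: quotient_graph_def)
  have qP: "q \<subseteq> Pow p" if "q \<in> PP ?R" for q
    using corr_sub[OF that] fR by blast
  have part1: "bij_betw (\<lambda>q. comp_corr q p) (PP ?R) {q \<in> PP T. corr_ge T q p}"
    unfolding bij_betw_def
  proof
    show "inj_on (\<lambda>q. comp_corr q p) (PP ?R)"
    proof (rule inj_onI)
      fix q1 q2 assume "q1 \<in> PP ?R" "q2 \<in> PP ?R" "comp_corr q1 p = comp_corr q2 p"
      then have "Union ` q1 = Union ` q2" unfolding comp_corr_def by simp
      then show "q1 = q2" using inj_on_image_eq_iff[OF iU qP qP] \<open>q1 \<in> PP ?R\<close> \<open>q2 \<in> PP ?R\<close> by simp
    qed
    show "(\<lambda>q. comp_corr q p) ` PP ?R = {q \<in> PP T. corr_ge T q p}"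
    proof (intro equalityI subsetI)
      fix x assume "x \<in> (\<lambda>q. comp_corr q p) ` PP ?R"
      then obtain q where "q \<in> PP ?R" "x = comp_corr q p" by blast
      then show "x \<in> {q \<in> PP T. corr_ge T q p}" using comp_PP[OF t p] unfolding corr_ge_def by blast
    next
      fix x assume "x \<in> {q \<in> PP T. corr_ge T q p}"
      then obtain q where "q \<in> PP ?R" "x = comp_corr q p" unfolding corr_ge_def by blast
      then show "x \<in> (\<lambda>q. comp_corr q p) ` PP ?R" by blast
    qed
  qed
  have part2: "corr_ge ?R q1 q2 \<longleftrightarrow> corr_ge T (comp_corr q1 p) (comp_corr q2 p)"
    if q1: "q1 \<in> PP ?R" and q2: "q2 \<in> PP ?R" for q1 q2
  proof -
    let ?G = "quotient_graph ?R q2"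
    have gG: "is_graph ?G" using corr_facts(4)[OF q2] unfolding is_tree_def by simp
    have fG: "fst ?G = q2" by (simp add: quotient_graph_def)
    have iq2: "inj_on Union q2" using iU qP[OF q2] by (meson inj_on_subset)
    have iG: "inj_on Union (fst ?G)" using iq2 fG by simp
    have H: "quotient_graph T (comp_corr q2 p) = gmap Union ?G"
      using quot_comp[OF t p q2] unfolding comp_corr_def by simp
    show ?thesis
    proof
      assume "corr_ge ?R q1 q2"
      then obtain r where r: "r \<in> PP ?G" "q1 = comp_corr r q2" unfolding corr_ge_def by blast
      have "image Union ` r \<in> PP (quotient_graph T (comp_corr q2 p))"
        using PP_gmap[OF gG iG r(1)] H by simp
      moreover have "comp_corr q1 p = comp_corr (image Union ` r) (comp_corr q2 p)"
        proof -
        have e: "\<And>X. \<Union>(Union ` X) = \<Union>(\<Union>X)" by blast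
        show ?thesis using r(2) unfolding comp_corr_def by (simp add: image_image e)
      qed
      ultimately show "corr_ge T (comp_corr q1 p) (comp_corr q2 p)" unfolding corr_ge_def by blast
    next
      assume "corr_ge T (comp_corr q1 p) (comp_corr q2 p)"
      then obtain r' where r': "r' \<in> PP (gmap Union ?G)"
          "comp_corr q1 p = comp_corr r' (comp_corr q2 p)" unfolding corr_ge_def H by blast
      define h where "h = inv_into (fst ?G) Union"
      have ih: "inj_on h (fst (gmap Union ?G))" unfolding h_def gmap_def
        by (simp add: inj_on_inv_into)
      have gH: "is_graph (gmap Union ?G)" using is_graph_gmap[OF gG iG] .
      define r where "r = image h ` r'"
      have rG: "r \<in> PP ?G" using PP_gmap[OF gH ih r'(1)] gmap_inv[OF gG iG]
        unfolding r_def h_def by simp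
      have r'sub: "\<And>Y. Y \<in> r' \<Longrightarrow> Y \<subseteq> Union ` q2"
        using corr_sub[OF r'(1)] fG unfolding gmap_def by auto
      have hU: "\<Union>(h z) = z" if "z \<in> Union ` q2" for z
        unfolding h_def fG using that by (simp add: f_inv_into_f)
      have "Union ` comp_corr r q2 = Union ` q1"
      proof -
        have "\<Union>(\<Union>(h ` Y)) = \<Union>Y" if "Y \<in> r'" for Y
        proof -
          have "\<Union>(\<Union>(h ` Y)) = \<Union>((\<lambda>z. \<Union>(h z)) ` Y)" by blast
          also have "\<dots> = \<Union>Y" using hU r'sub[OF that] by (simp add: subset_iff)
          finally show ?thesis .
        qed
        then have "Union ` comp_corr r q2 = Union ` r'"
          unfolding comp_corr_def r_def by (simp add: image_image)
        also have "\<dots> = Union ` q1" using r'(2) unfolding comp_corr_def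
          by (simp add: image_image)
        finally show ?thesis .
      qed
      moreover have "comp_corr r q2 \<subseteq> Pow p"
      proof -
        have "\<And>Y. Y \<in> r \<Longrightarrow> Y \<subseteq> q2" using corr_sub[OF rG] fG by simp
        then show ?thesis using qP[OF q2] unfolding comp_corr_def by blast
      qed
      ultimately have "q1 = comp_corr r q2" using inj_on_image_eq_iff[OF iU qP[OF q1]] by metis
      then show "corr_ge ?R q1 q2" using rG unfolding corr_ge_def by blast
    qed
  qed
  show ?thesis by (rule conjI[OF part1]) (intro ballI part2)
qed


end
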